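(* Consider the soft UCB algorithm described in the context, with $\xi(t)=1+\frac{t}{G(t)}$. Then the expected regret at time $n$ satisfies \[ \mathbb{E}[R_n]\le\sum_{j=1}^m G(j)\Delta_j+\max_{t\in\{m+1,\dots,n\}}G(t)\left(\sum_{j:\mu_j<\mu_*}\frac{8}{\Delta_j}\log\Big(\max_{t\in\{m+1,\dots,n\}}\xi(t)\Big)+\sum_{j=1}^m\Delta_j\Big[1+\sum_{t=m+1}^n2\,\xi(t)^{-4}(t-1-m)^2\Big]\right). \]
   Context: Setting: $m$ arms, $n$ rounds. Playing arm $j$ at round $t$ produces an unscaled random reward $X_j(t)$, drawn independently over rounds from a fixed unknown distribution on $[0,1]$ with mean $\mu_j$. $G:\{1,\dots,n\}\to\mathbb{R}^+$ is a known bounded multiplier function; playing arm $I_t=j$ yields $G(t)X_j(t)$. $\mu_*=\max_j\mu_j$, $\Delta_j=\mu_*-\mu_j$, regret $R_n=\sum_{t=1}^n\sum_{j=1}^m\Delta_jG(t)\mathbf{1}_{\{I_t=j\}}$. $T_j(t-1)$ is the number of plays of arm $j$ before round $t$, and $\widehat X_{j,T_j(t-1)}$ is the average of the unscaled rewards observed from arm $j$. Algorithm (soft UCB): play each arm once (arm $j$ at round $j$). For $t=m+1,\dots,n$: play an arm maximizing $\widehat X_{j,T_j(t-1)}+\sqrt{2\log\xi(t)/T_j(t-1)}$, where $\xi(t)=1+t/G(t)$; receive $G(t)X_j$ and update $\widehat X_j$. *)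

theory Defs
  imports "HOL-Probability.Probability"
begin

text \<open>Soft UCB. Arms are 1..m, rounds are 1..n. A history h is the list of arms
played in rounds 1..length h (round s+1 is h!s). The unscaled reward sample is
x j t = reward of arm j if played at round t.\<close>

definition xi :: "(nat \<Rightarrow> real) \<Rightarrow> nat \<Rightarrow> real" where
  "xi G t = 1 + real t / G t"

text \<open>Number of plays of arm j in the history (T_j(t-1) for t = length h + 1).\<close>
definition plays :: "nat list \<Rightarrow> nat \<Rightarrow> nat" where
  "plays h j = card {s. s < length h \<and> h ! s = j}"

definition emp_mean :: "(nat \<Rightarrow> nat \<Rightarrow> real) \<Rightarrow> nat list \<Rightarrow> nat \<Rightarrow> real" where
  "emp_mean x h j = (\<Sum>s | s < length h \<and> h ! s = j. x j (s + 1)) / real (plays h j)"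

definition ucb_index :: "(nat \<Rightarrow> real) \<Rightarrow> (nat \<Rightarrow> nat \<Rightarrow> real) \<Rightarrow> nat list \<Rightarrow> nat \<Rightarrow> real" where
  "ucb_index G x h j =
     emp_mean x h j + sqrt (2 * ln (xi G (length h + 1)) / real (plays h j))"

definition ucb_choice :: "nat \<Rightarrow> (nat \<Rightarrow> real) \<Rightarrow> (nat \<Rightarrow> nat \<Rightarrow> real) \<Rightarrow> nat list \<Rightarrow> nat" where
  "ucb_choice m G x h =
     (if length h + 1 \<le> m then length h + 1
      else (LEAST j. j \<in> {1..m} \<and> (\<forall>i\<in>{1..m}. ucb_index G x h i \<le> ucb_index G x h j)))"

primrec ucb_hist :: "nat \<Rightarrow> (nat \<Rightarrow> real) \<Rightarrow> (nat \<Rightarrow> nat \<Rightarrow> real) \<Rightarrow> nat \<Rightarrow> nat list" where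
  "ucb_hist m G x 0 = []"
| "ucb_hist m G x (Suc k) = ucb_hist m G x k @ [ucb_choice m G x (ucb_hist m G x k)]"

definition ucb_arm :: "nat \<Rightarrow> (nat \<Rightarrow> real) \<Rightarrow> (nat \<Rightarrow> nat \<Rightarrow> real) \<Rightarrow> nat \<Rightarrow> nat" where
  "ucb_arm m G x t = ucb_hist m G x t ! (t - 1)"

definition regret :: "nat \<Rightarrow> nat \<Rightarrow> (nat \<Rightarrow> real) \<Rightarrow> (nat \<Rightarrow> real) \<Rightarrow> (nat \<Rightarrow> nat \<Rightarrow> real) \<Rightarrow> real" where
  "regret m n G mu x =
     (\<Sum>t\<in>{1..n}. \<Sum>j\<in>{1..m}.
        (Max (mu ` {1..m}) - mu j) * G t * (if ucb_arm m G x t = j then 1 else 0))"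

end

theory Submission
  imports Defs
begin


lemma hist_length[simp]: "length (ucb_hist m G x k) = k"
  by (induction k) auto

lemma hist_prefix: "k \<le> k' \<Longrightarrow> ucb_hist m G x k = take k (ucb_hist m G x k')"
proof (induction k')
  case 0 then show ?case by simp
next
  case (Suc k')
  show ?case
  proof (cases "k \<le> k'")
    case True
    then show ?thesis using Suc by simp
  next
    case False
    then have "k = Suc k'" using Suc by simp
    then show ?thesis by simp
  qed
qed

lemma hist_nth: "i < k \<Longrightarrow> ucb_hist m G x k ! i = ucb_choice m G x (ucb_hist m G x i)"
proof -
  assume "i < k"
  then have "ucb_hist m G x (Suc i) = take (Suc i) (ucb_hist m G x k)"
    by (intro hist_prefix) simp
  then have "ucb_hist m G x k ! i = ucb_hist m G x (Suc i) ! i" by simp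
  then show ?thesis by (simp add: nth_append)
qed

lemma arm_Suc: "ucb_arm m G x (Suc k) = ucb_choice m G x (ucb_hist m G x k)"
  by (simp add: ucb_arm_def nth_append)

lemma plays_snoc: "plays (h @ [a]) j = plays h j + (if a = j then 1 else 0)"
proof -
  have "{s. s < length (h @ [a]) \<and> (h @ [a]) ! s = j} =
        {s. s < length h \<and> h ! s = j} \<union> (if a = j then {length h} else {})"
    by (auto simp: nth_append less_Suc_eq split: if_splits)
  then show ?thesis
    by (simp add: plays_def)
qed

lemma plays_hist_Suc: "plays (ucb_hist m G x (Suc k)) j =
   plays (ucb_hist m G x k) j + (if ucb_arm m G x (Suc k) = j then 1 else 0)"
  by (simp add: plays_snoc arm_Suc)

lemma plays_mono: "k \<le> k' \<Longrightarrow> plays (ucb_hist m G x k) j \<le> plays (ucb_hist m G x k') j"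
proof (induction k' rule: dec_induct)
  case base then show ?case by simp
next
  case (step k') then show ?case by (simp add: plays_snoc)
qed

lemma choice_init: "length h < m \<Longrightarrow> ucb_choice m G x h = length h + 1"
  by (simp add: ucb_choice_def)

lemma exists_max: "1 \<le> m \<Longrightarrow> \<exists>j. j \<in> {1..m} \<and> (\<forall>i\<in>{1..(m::nat)}. (f::nat\<Rightarrow>real) i \<le> f j)"
proof -
  assume "1 \<le> m"
  then have ne: "f ` {1..m} \<noteq> {}" by auto
  have "Max (f ` {1..m}) \<in> f ` {1..m}" using ne by (intro Max_in) auto
  then obtain j where "j \<in> {1..m}" "f j = Max (f ` {1..m})" by auto
  then show ?thesis by (metis Max_ge finite_atLeastAtMost finite_imageI imageI)
qed

lemma choice_props:
  assumes "1 \<le> m" "m \<le> length h"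
  shows "ucb_choice m G x h \<in> {1..m} \<and> (\<forall>i\<in>{1..m}. ucb_index G x h i \<le> ucb_index G x h (ucb_choice m G x h))"
proof -
  have c: "ucb_choice m G x h = (LEAST j. j \<in> {1..m} \<and> (\<forall>i\<in>{1..m}. ucb_index G x h i \<le> ucb_index G x h j))"
    using assms by (simp add: ucb_choice_def)
  obtain j where "j \<in> {1..m} \<and> (\<forall>i\<in>{1..m}. ucb_index G x h i \<le> ucb_index G x h j)"
    using exists_max[OF assms(1)] by blast
  then show ?thesis unfolding c by (rule LeastI)
qed

lemma choice_in: "1 \<le> m \<Longrightarrow> ucb_choice m G x h \<in> {1..m}"
proof (cases "length h < m")
  case True
  assume "1 \<le> m"
  then show ?thesis using True by (simp add: choice_init)
next
  case False
  assume "1 \<le> m"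
  then show ?thesis using choice_props[of m h G x] False by simp
qed

lemma hist_set: "1 \<le> m \<Longrightarrow> set (ucb_hist m G x k) \<subseteq> {1..m}"
proof (induction k)
  case (Suc k)
  have "ucb_choice m G x (ucb_hist m G x k) \<in> {1..m}" using Suc by (intro choice_in)
  then show ?case using Suc by simp
qed simp

lemma plays_init:
  assumes "1 \<le> i" "i \<le> m" "m \<le> k"
  shows "1 \<le> plays (ucb_hist m G x k) i"
proof -
  have "ucb_hist m G x k ! (i - 1) = ucb_choice m G x (ucb_hist m G x (i - 1))"
    using assms by (intro hist_nth) auto
  also have "\<dots> = i" using assms by (simp add: choice_init)
  finally have "i - 1 \<in> {s. s < length (ucb_hist m G x k) \<and> ucb_hist m G x k ! s = i}"
    using assms by auto
  then have "{s. s < length (ucb_hist m G x k) \<and> ucb_hist m G x k ! s = i} \<noteq> {}" by blast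
  then show ?thesis unfolding plays_def
    by (simp add: Suc_leI card_gt_0_iff)
qed

lemma plays_sum: "set h \<subseteq> {1..m} \<Longrightarrow> (\<Sum>i\<in>{1..m}. plays h i) = length h"
proof (induction h rule: rev_induct)
  case Nil then show ?case by (simp add: plays_def)
next
  case (snoc a h)
  then have "a \<in> {1..m}" by auto
  then show ?case using snoc by (simp add: plays_snoc sum.distrib)
qed

lemma hist_local:
  assumes "\<And>j r. j \<in> {1..m} \<Longrightarrow> 1 \<le> r \<Longrightarrow> r < k \<Longrightarrow> x j r = x' j r"
  shows "ucb_hist m G x k = ucb_hist m G x' k"
  using assms
proof (induction k)
  case 0 then show ?case by simp
next
  case (Suc k)
  have IH: "ucb_hist m G x k = ucb_hist m G x' k"
    using Suc by auto
  define h where "h = ucb_hist m G x' k"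
  have lh: "length h = k" by (simp add: h_def)
  have em: "emp_mean x h j = emp_mean x' h j" if "j \<in> {1..m}" for j
    unfolding emp_mean_def using that lh Suc.prems
    by (intro arg_cong2[where f="(/)"] sum.cong) auto
  have idx: "ucb_index G x h j = ucb_index G x' h j" if "j \<in> {1..m}" for j
    using em[OF that] by (simp add: ucb_index_def)
  have "ucb_choice m G x h = ucb_choice m G x' h"
    unfolding ucb_choice_def
    by (intro if_cong refl arg_cong[where f=Least] ext) (use idx in auto)
  then show ?case using IH by (simp add: h_def)
qed

lemma meas_choice:
  assumes [measurable]: "\<And>j t. (\<lambda>\<omega>. x \<omega> j t) \<in> borel_measurable N"
  shows "(\<lambda>\<omega>. ucb_choice m G (x \<omega>) h) \<in> N \<rightarrow>\<^sub>M count_space UNIV"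
  unfolding ucb_choice_def ucb_index_def emp_mean_def
  by measurable

lemma meas_hist:
  assumes [measurable]: "\<And>j t. (\<lambda>\<omega>. x \<omega> j t) \<in> borel_measurable N"
  shows "(\<lambda>\<omega>. ucb_hist m G (x \<omega>) k) \<in> N \<rightarrow>\<^sub>M count_space UNIV"
proof (induction k)
  case 0 then show ?case by simp
next
  case (Suc k)
  have "(\<lambda>\<omega>. (\<lambda>h. h @ [ucb_choice m G (x \<omega>) h]) (ucb_hist m G (x \<omega>) k)) \<in> N \<rightarrow>\<^sub>M count_space UNIV"
  proof (rule measurable_compose_countable[where f="\<lambda>h \<omega>. h @ [ucb_choice m G (x \<omega>) h]"])
    fix h :: "nat list"
    have "(\<lambda>\<omega>. ucb_choice m G (x \<omega>) h) \<in> N \<rightarrow>\<^sub>M count_space UNIV"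
      by (rule meas_choice) (rule assms)
    then show "(\<lambda>\<omega>. h @ [ucb_choice m G (x \<omega>) h]) \<in> N \<rightarrow>\<^sub>M count_space UNIV"
      by (rule measurable_compose[OF _ measurable_count_space])
  qed (rule Suc)
  then show ?case by simp
qed

definition condp :: "nat \<Rightarrow> (nat \<Rightarrow> real) \<Rightarrow> nat \<Rightarrow> nat \<Rightarrow> (nat \<Rightarrow> nat \<Rightarrow> real) \<Rightarrow> nat \<Rightarrow> bool" where
  "condp m G i s x r = (ucb_hist m G x r ! (r - 1) = i \<and> plays (take (r - 1) (ucb_hist m G x r)) i < s)"

definition Wsum :: "nat \<Rightarrow> (nat \<Rightarrow> real) \<Rightarrow> nat \<Rightarrow> nat \<Rightarrow> real \<Rightarrow> real \<Rightarrow> (nat \<Rightarrow> nat \<Rightarrow> real) \<Rightarrow> nat \<Rightarrow> real" where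
  "Wsum m G i s \<sigma> \<mu> x R = (\<Sum>r\<in>{1..R}. if condp m G i s x r then \<sigma> * (x i r - \<mu>) else 0)"

definition Ksum :: "nat \<Rightarrow> (nat \<Rightarrow> real) \<Rightarrow> nat \<Rightarrow> nat \<Rightarrow> (nat \<Rightarrow> nat \<Rightarrow> real) \<Rightarrow> nat \<Rightarrow> real" where
  "Ksum m G i s x R = (\<Sum>r\<in>{1..R}. if condp m G i s x r then 1 else 0)"

definition Phi :: "nat \<Rightarrow> (nat \<Rightarrow> real) \<Rightarrow> nat \<Rightarrow> nat \<Rightarrow> real \<Rightarrow> real \<Rightarrow> real \<Rightarrow> (nat \<Rightarrow> nat \<Rightarrow> real) \<Rightarrow> nat \<Rightarrow> real" where
  "Phi m G i s \<sigma> \<mu> l x R = exp (l * Wsum m G i s \<sigma> \<mu> x R - l^2/8 * Ksum m G i s x R)"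

lemma Phi_0: "Phi m G i s \<sigma> \<mu> l x 0 = 1"
  by (simp add: Phi_def Wsum_def Ksum_def)

lemma Phi_Suc: "Phi m G i s \<sigma> \<mu> l x (Suc R) = Phi m G i s \<sigma> \<mu> l x R *
   (if condp m G i s x (Suc R) then exp (l * (\<sigma> * (x i (Suc R) - \<mu>)) - l^2/8) else 1)"
proof -
  have e: "{1..Suc R} = insert (Suc R) {1..R}" by auto
  show ?thesis
    by (cases "condp m G i s x (Suc R)")
       (simp_all add: Phi_def Wsum_def Ksum_def e mult_exp_exp algebra_simps)
qed

lemma condp_local:
  assumes "\<And>j r. j \<in> {1..m} \<Longrightarrow> 1 \<le> r \<Longrightarrow> r < R \<Longrightarrow> x j r = x' j r"
  shows "condp m G i s x R = condp m G i s x' R"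
  unfolding condp_def using hist_local[of m R x x' G] assms by simp

lemma Phi_local:
  assumes "i \<in> {1..m}" "\<And>j r. j \<in> {1..m} \<Longrightarrow> 1 \<le> r \<Longrightarrow> r \<le> R \<Longrightarrow> x j r = x' j r"
  shows "Phi m G i s \<sigma> \<mu> l x R = Phi m G i s \<sigma> \<mu> l x' R"
proof -
  have c: "condp m G i s x r = condp m G i s x' r" if "r \<in> {1..R}" for r
    using that assms(2) by (intro condp_local) auto
  have "Wsum m G i s \<sigma> \<mu> x R = Wsum m G i s \<sigma> \<mu> x' R"
    unfolding Wsum_def using c assms by (intro sum.cong) auto
  moreover have "Ksum m G i s x R = Ksum m G i s x' R"
    unfolding Ksum_def using c by (intro sum.cong) auto
  ultimately show ?thesis by (simp add: Phi_def)
qed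

lemma meas_condp:
  assumes "\<And>j t. (\<lambda>\<omega>. x \<omega> j t) \<in> borel_measurable N"
  shows "Measurable.pred N (\<lambda>\<omega>. condp m G i s (x \<omega>) r)"
proof -
  have "(\<lambda>\<omega>. (\<lambda>h. h ! (r - 1) = i \<and> plays (take (r - 1) h) i < s) (ucb_hist m G (x \<omega>) r))
          \<in> N \<rightarrow>\<^sub>M count_space UNIV"
    by (rule measurable_compose[OF meas_hist[OF assms] measurable_count_space])
  then show ?thesis unfolding pred_def condp_def by simp
qed

lemma meas_Phi:
  assumes "\<And>j t. (\<lambda>\<omega>. x \<omega> j t) \<in> borel_measurable N"
  shows "(\<lambda>\<omega>. Phi m G i s \<sigma> \<mu> l (x \<omega>) R) \<in> borel_measurable N"
proof -
  note [measurable] = meas_condp[OF assms] assms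
  show ?thesis unfolding Phi_def Wsum_def Ksum_def by measurable
qed

lemma condp_eq:
  assumes "1 \<le> r" "r \<le> R"
  shows "condp m G i s x r = (ucb_hist m G x R ! (r - 1) = i \<and> plays (ucb_hist m G x (r - 1)) i < s)"
proof -
  have h: "ucb_hist m G x r = take r (ucb_hist m G x R)" using assms by (intro hist_prefix)
  have h2: "ucb_hist m G x (r - 1) = take (r - 1) (ucb_hist m G x R)" using assms by (intro hist_prefix) auto
  show ?thesis unfolding condp_def h h2 using assms by (simp add: min_def)
qed

lemma plays_hist_before:
  assumes "1 \<le> r" "r \<le> R" "ucb_hist m G x R ! (r - 1) = i"
  shows "plays (ucb_hist m G x (r - 1)) i < plays (ucb_hist m G x R) i"
proof -
  obtain k where k: "r = Suc k" using assms by (cases r) auto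
  have "ucb_hist m G x R ! k = ucb_choice m G x (ucb_hist m G x k)"
    using assms k by (intro hist_nth) auto
  then have "ucb_arm m G x (Suc k) = i" using assms k by (simp add: arm_Suc)
  then have "plays (ucb_hist m G x (Suc k)) i = plays (ucb_hist m G x k) i + 1"
    using plays_hist_Suc[of m G x k i] by (simp del: ucb_hist.simps)
  moreover have "plays (ucb_hist m G x (Suc k)) i \<le> plays (ucb_hist m G x R) i"
    using assms k by (intro plays_mono) auto
  ultimately show ?thesis using k by simp
qed

lemma KW:
  assumes "plays (ucb_hist m G x R) i = s" "1 \<le> s"
  shows "Ksum m G i s x R = s"
    and "Wsum m G i s \<sigma> \<mu> x R = s * \<sigma> * (emp_mean x (ucb_hist m G x R) i - \<mu>)"
proof -
  define P where "P = {k. k < R \<and> ucb_hist m G x R ! k = i}"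
  have S: "{r\<in>{1..R}. condp m G i s x r} = Suc ` P"
  proof
    show "{r\<in>{1..R}. condp m G i s x r} \<subseteq> Suc ` P"
    proof
      fix r assume r: "r \<in> {r\<in>{1..R}. condp m G i s x r}"
      then have "ucb_hist m G x R ! (r - 1) = i" using condp_eq[of r R] by auto
      moreover have "r = Suc (r - 1)" "r - 1 < R" using r by auto
      ultimately show "r \<in> Suc ` P" unfolding P_def by (metis (mono_tags, lifting) image_eqI mem_Collect_eq)
    qed
  next
    show "Suc ` P \<subseteq> {r\<in>{1..R}. condp m G i s x r}"
    proof
      fix r assume "r \<in> Suc ` P"
      then obtain k where k: "r = Suc k" "k < R" "ucb_hist m G x R ! k = i" unfolding P_def by auto
      have "plays (ucb_hist m G x k) i < s"
        using plays_hist_before[of "Suc k" R m G x i] k assms by simp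
      then show "r \<in> {r\<in>{1..R}. condp m G i s x r}"
        using k condp_eq[of "Suc k" R m G i s x] by simp
    qed
  qed
  have fP: "finite P" unfolding P_def by simp
  have cP: "card P = s" using assms(1) unfolding P_def plays_def by simp
  have "Ksum m G i s x R = (\<Sum>r\<in>{r\<in>{1..R}. condp m G i s x r}. 1)"
    unfolding Ksum_def by (rule sym[OF sum.inter_filter]) simp
  also have "\<dots> = card (Suc ` P)" unfolding S by simp
  also have "\<dots> = s" using cP by (simp add: card_image)
  finally show "Ksum m G i s x R = s" .
  have "Wsum m G i s \<sigma> \<mu> x R = (\<Sum>r\<in>{r\<in>{1..R}. condp m G i s x r}. \<sigma> * (x i r - \<mu>))"
    unfolding Wsum_def by (rule sym[OF sum.inter_filter]) simp
  also have "\<dots> = (\<Sum>k\<in>P. \<sigma> * (x i (Suc k) - \<mu>))" unfolding S by (simp add: sum.reindex)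
  also have "\<dots> = \<sigma> * ((\<Sum>k\<in>P. x i (k + 1)) - s * \<mu>)"
    using cP by (simp add: sum_distrib_left sum_subtractf algebra_simps)
  also have "(\<Sum>k\<in>P. x i (k + 1)) = s * emp_mean x (ucb_hist m G x R) i"
    using assms unfolding emp_mean_def P_def by simp
  finally show "Wsum m G i s \<sigma> \<mu> x R = s * \<sigma> * (emp_mean x (ucb_hist m G x R) i - \<mu>)"
    by (simp add: algebra_simps)
qed






definition Aev :: "nat \<Rightarrow> (nat \<Rightarrow> real) \<Rightarrow> (nat \<Rightarrow> nat \<Rightarrow> real) \<Rightarrow> nat \<Rightarrow> nat \<Rightarrow> nat \<Rightarrow> real \<Rightarrow> real \<Rightarrow> bool" where
  "Aev m G x i t s \<sigma> \<mu> = (plays (ucb_hist m G x (t - 1)) i = s \<and>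
      sqrt (2 * ln (xi G t) / real s) \<le> \<sigma> * (emp_mean x (ucb_hist m G x (t - 1)) i - \<mu>))"

lemma arm_hist_nth:
  assumes "1 \<le> r" "r \<le> R"
  shows "ucb_hist m G x R ! (r - 1) = ucb_arm m G x r"
proof -
  obtain k where k: "r = Suc k" using assms by (cases r) auto
  have "ucb_hist m G x R ! k = ucb_choice m G x (ucb_hist m G x k)"
    using assms k by (intro hist_nth) auto
  then show ?thesis using k by (simp add: arm_Suc)
qed

lemma plays_strict:
  assumes "1 \<le> t1" "t1 < t2" "ucb_arm m G x t1 = j"
  shows "plays (ucb_hist m G x (t1 - 1)) j < plays (ucb_hist m G x (t2 - 1)) j"
  using plays_hist_before[of t1 "t2 - 1" m G x j] arm_hist_nth[of t1 "t2 - 1" m G x] assms by simp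

lemma sum_ind_card: "finite A \<Longrightarrow> (\<Sum>t\<in>A. if P t then 1 else 0 :: real) = card {t\<in>A. P t}"
  by (subst sum.inter_filter[symmetric]) simp_all

lemma count_plays:
  assumes m1: "1 \<le> m" and l1: "1 \<le> ell"
  shows "(\<Sum>t\<in>{m+1..n}. if ucb_arm m G x t = j then 1 else 0 :: real)
     \<le> real (ell - 1) + (\<Sum>t\<in>{m+1..n}. if ucb_arm m G x t = j \<and> ell \<le> plays (ucb_hist m G x (t - 1)) j then 1 else 0)"
proof -
  define S where "S = {t\<in>{m+1..n}. ucb_arm m G x t = j \<and> plays (ucb_hist m G x (t - 1)) j < ell}"
  have split: "(\<Sum>t\<in>{m+1..n}. if ucb_arm m G x t = j then 1 else 0 :: real) =
     (\<Sum>t\<in>{m+1..n}. if ucb_arm m G x t = j \<and> ell \<le> plays (ucb_hist m G x (t - 1)) j then 1 else 0)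
     + (\<Sum>t\<in>{m+1..n}. if ucb_arm m G x t = j \<and> plays (ucb_hist m G x (t - 1)) j < ell then 1 else 0)"
    by (subst sum.distrib[symmetric]) (intro sum.cong, auto)
  have cS: "(\<Sum>t\<in>{m+1..n}. if ucb_arm m G x t = j \<and> plays (ucb_hist m G x (t - 1)) j < ell then 1 else 0 :: real)
      = card S" unfolding S_def by (rule sum_ind_card) simp
  have inj: "inj_on (\<lambda>t. plays (ucb_hist m G x (t - 1)) j) S"
  proof (rule inj_onI)
    fix a b assume a: "a \<in> S" and b: "b \<in> S" and eq: "plays (ucb_hist m G x (a - 1)) j = plays (ucb_hist m G x (b - 1)) j"
    show "a = b"
    proof (rule ccontr)
      assume "a \<noteq> b"
      then consider "a < b" | "b < a" by linarith
      then show False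
      proof cases
        case 1 then show False using plays_strict[of a b m G x j] a b eq unfolding S_def by auto
      next
        case 2 then show False using plays_strict[of b a m G x j] a b eq unfolding S_def by auto
      qed
    qed
  qed
  have img: "(\<lambda>t. plays (ucb_hist m G x (t - 1)) j) ` S \<subseteq> {1..ell - 1}"
  proof
    fix v assume "v \<in> (\<lambda>t. plays (ucb_hist m G x (t - 1)) j) ` S"
    then obtain t where t: "t \<in> S" "v = plays (ucb_hist m G x (t - 1)) j" by auto
    have t1: "t = Suc (t - 1)" using t m1 unfolding S_def by auto
    have "ucb_arm m G x t \<in> {1..m}"
      by (subst t1, simp only: arm_Suc, rule choice_in[OF m1])
    then have "j \<in> {1..m}" using t unfolding S_def by auto
    then have "1 \<le> v" using t plays_init[of j m "t - 1" G x] unfolding S_def by auto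
    moreover have "v < ell" using t unfolding S_def by auto
    ultimately show "v \<in> {1..ell - 1}" by auto
  qed
  have "card S \<le> card {1..ell - 1}"
    by (rule card_inj_on_le[OF inj img]) simp
  then have "card S \<le> ell - 1" by simp
  then show ?thesis unfolding split cS by simp
qed

lemma bad_event:
  assumes m1: "1 \<le> m" and t: "m < t"
    and istar: "istar \<in> {1..m}" and j: "j \<in> {1..m}"
    and Dpos: "mu j < mu istar"
    and xi1: "0 < ln (xi G t)" and xiL: "ln (xi G t) \<le> Lx"
    and hell: "8 * Lx / (mu istar - mu j)^2 \<le> real ell" and hell2: "2 \<le> ell"
    and arm: "ucb_arm m G x t = j" and pl: "ell \<le> plays (ucb_hist m G x (t - 1)) j"
  shows "(\<exists>s\<in>{1..t-m-1}. Aev m G x istar t s (-1) (mu istar)) \<or> (\<exists>s\<in>{2..t-m}. Aev m G x j t s 1 (mu j))"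
proof (rule ccontr)
  assume neg: "\<not> ?thesis"
  define h where "h = ucb_hist m G x (t - 1)"
  have lh: "length h = t - 1" by (simp add: h_def)
  have mh: "m \<le> length h" using lh t by simp
  have ch: "ucb_arm m G x t = ucb_choice m G x h"
    using arm_Suc[of m G x "t - 1"] t by (simp add: h_def)
  have idx: "ucb_index G x h istar \<le> ucb_index G x h j"
    using choice_props[OF m1 mh, of G x] istar arm ch by auto
  define Ts where "Ts = plays h istar"
  define Tj where "Tj = plays h j"
  have Ts1: "1 \<le> Ts" unfolding Ts_def h_def using istar t by (intro plays_init) auto
  have Tj2: "2 \<le> Tj" using pl hell2 by (simp add: Tj_def h_def)
  have neq: "istar \<noteq> j" using Dpos by auto
  have sum: "(\<Sum>i\<in>{1..m}. plays h i) = t - 1"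
    using plays_sum[OF hist_set[OF m1]] lh by (simp add: h_def)
  have rest: "Ts + Tj + (m - 2) \<le> t - 1"
  proof -
    define Rs where "Rs = {1..m} - {istar} - {j}"
    have e1: "(\<Sum>i\<in>{1..m}. plays h i) = Ts + (\<Sum>i\<in>{1..m} - {istar}. plays h i)"
      unfolding Ts_def using istar by (simp add: sum.remove)
    have e2: "(\<Sum>i\<in>{1..m} - {istar}. plays h i) = Tj + (\<Sum>i\<in>Rs. plays h i)"
      unfolding Tj_def Rs_def using j neq by (subst sum.remove[of _ j]) auto
    have e3: "(\<Sum>i\<in>Rs. (1::nat)) \<le> (\<Sum>i\<in>Rs. plays h i)"
    proof (rule sum_mono)
      fix i assume "i \<in> Rs"
      then have "1 \<le> i" "i \<le> m" by (auto simp: Rs_def)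
      then show "1 \<le> plays h i" unfolding h_def using t by (intro plays_init) auto
    qed
    have "Ts + (Tj + card Rs) \<le> t - 1" using e1 e2 e3 sum by simp
    moreover have "card Rs = m - 2" unfolding Rs_def using istar j neq by (simp add: card_Diff_singleton)
    ultimately show ?thesis by simp
  qed
  have m2: "2 \<le> m" using istar j neq by auto
  have TsR: "Ts \<in> {1..t-m-1}" using Ts1 rest Tj2 m2 t by auto
  have TjR: "Tj \<in> {2..t-m}" using Tj2 rest Ts1 m2 t by auto
  define cs where "cs = sqrt (2 * ln (xi G t) / real Ts)"
  define cj where "cj = sqrt (2 * ln (xi G t) / real Tj)"
  have ns: "\<not> Aev m G x istar t Ts (-1) (mu istar)" using neg TsR by auto
  have nj: "\<not> Aev m G x j t Tj 1 (mu j)" using neg TjR by auto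
  have es: "mu istar < emp_mean x h istar + cs"
    using ns unfolding Aev_def cs_def Ts_def h_def by auto
  have ej: "emp_mean x h j < mu j + cj"
    using nj unfolding Aev_def cj_def Tj_def h_def by auto
  define D where "D = mu istar - mu j"
  have Dp: "0 < D" using Dpos by (simp add: D_def)
  have "8 * Lx \<le> real Tj * D^2"
  proof -
    have "8 * Lx / D^2 \<le> real Tj" using hell pl by (simp add: D_def Tj_def h_def)
    then show ?thesis using Dp by (simp add: divide_le_eq mult.commute)
  qed
  then have "8 * ln (xi G t) \<le> real Tj * D^2" using xiL by linarith
  then have "2 * ln (xi G t) / real Tj \<le> (D/2)^2"
    using Tj2 by (simp add: divide_le_eq power_divide algebra_simps)
  then have "cj \<le> sqrt ((D/2)^2)" unfolding cj_def by (rule real_sqrt_le_mono)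
  then have cjD: "cj \<le> D/2" using Dp by simp
  have "ucb_index G x h istar = emp_mean x h istar + cs"
    unfolding ucb_index_def cs_def Ts_def using lh t by simp
  moreover have "ucb_index G x h j = emp_mean x h j + cj"
    unfolding ucb_index_def cj_def Tj_def using lh t by simp
  ultimately show False using idx es ej cjD D_def by linarith
qed

lemma (in prob_space) hoeff_int:
  fixes f :: "'a \<Rightarrow> real"
  assumes f[measurable]: "f \<in> borel_measurable M" and fr: "\<And>\<omega>. \<omega> \<in> space M \<Longrightarrow> f \<omega> \<in> {a..b}"
    and ab: "b - a = 1" and l: "l > 0"
  shows "integral\<^sup>L M (\<lambda>\<omega>. exp (l * (f \<omega> - expectation f))) \<le> exp (l^2/8)"
proof -
  interpret interval_bounded_random_variable M f a b
    by (intro interval_bounded_random_variable.intro interval_bounded_random_variable_axioms.intro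
          prob_space_axioms f AE_I2 fr)
  have nn: "(\<integral>\<^sup>+\<omega>. ennreal (exp (l * (f \<omega> - expectation f))) \<partial>M) \<le> ennreal (exp (l^2/8))"
    using Hoeffdings_lemma_nn_integral[OF l] ab by simp
  have "integral\<^sup>L M (\<lambda>\<omega>. exp (l * (f \<omega> - expectation f)))
        = enn2real (\<integral>\<^sup>+\<omega>. ennreal (exp (l * (f \<omega> - expectation f))) \<partial>M)"
    by (rule integral_eq_nn_integral) auto
  also have "\<dots> \<le> exp (l^2/8)"
    by (rule enn2real_leI[OF _ nn]) simp
  finally show ?thesis .
qed

locale bandit =
  fixes M :: "'a measure" and X :: "nat \<Rightarrow> nat \<Rightarrow> 'a \<Rightarrow> real"
    and mu :: "nat \<Rightarrow> real" and G :: "nat \<Rightarrow> real" and m n :: nat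
  assumes PS: "prob_space M"
    and mn: "m < n"
    and Gpos: "\<And>t. t \<in> {1..n} \<Longrightarrow> G t > 0"
    and Xmeas: "\<And>j t. j \<in> {1..m} \<Longrightarrow> t \<in> {1..n} \<Longrightarrow> X j t \<in> borel_measurable M"
    and Xrange: "\<And>j t \<omega>. j \<in> {1..m} \<Longrightarrow> t \<in> {1..n} \<Longrightarrow> \<omega> \<in> space M \<Longrightarrow> X j t \<omega> \<in> {0..1}"
    and Xmean: "\<And>j t. j \<in> {1..m} \<Longrightarrow> t \<in> {1..n} \<Longrightarrow> integral\<^sup>L M (X j t) = mu j"
    and Xindep: "prob_space.indep_vars M (\<lambda>_. PiM {1..m} (\<lambda>_. borel))
           (\<lambda>t \<omega>. \<lambda>j\<in>{1..m}. X j t \<omega>) {1..n}"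
begin

sublocale P: prob_space M by (rule PS)

definition xt :: "'a \<Rightarrow> nat \<Rightarrow> nat \<Rightarrow> real" where
  "xt \<omega> = (\<lambda>j t. if j \<in> {1..m} \<and> t \<in> {1..n} then X j t \<omega> else 0)"

lemma xt_meas[measurable]: "(\<lambda>\<omega>. xt \<omega> j t) \<in> borel_measurable M"
  unfolding xt_def using Xmeas by (cases "j \<in> {1..m} \<and> t \<in> {1..n}") auto

lemma xt_range: "\<omega> \<in> space M \<Longrightarrow> xt \<omega> j t \<in> {0..1}"
  unfolding xt_def using Xrange by auto

lemma bnd_int:
  fixes f :: "'a \<Rightarrow> real"
  assumes "f \<in> borel_measurable M" "\<And>\<omega>. \<omega> \<in> space M \<Longrightarrow> \<bar>f \<omega>\<bar> \<le> B"
  shows "integrable M f"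
  by (rule P.integrable_const_bound[where B=B]) (use assms in \<open>auto intro: AE_I2\<close>)

lemma mu_range: assumes "j \<in> {1..m}" shows "mu j \<in> {0..1}"
proof -
  have n1: "1 \<in> {1..n}" using mn by auto
  have int: "integrable M (X j 1)"
    by (rule bnd_int[where B=1]) (use Xmeas[OF assms n1] Xrange[OF assms n1] in auto)
  have "0 \<le> integral\<^sup>L M (X j 1)"
    by (rule integral_nonneg_AE) (use Xrange[OF assms n1] in \<open>auto intro: AE_I2\<close>)
  moreover have "integral\<^sup>L M (X j 1) \<le> integral\<^sup>L M (\<lambda>_. 1::real)"
    by (rule integral_mono[OF int]) (use Xrange[OF assms n1] in auto)
  ultimately show ?thesis using Xmean[OF assms n1] by (simp add: P.prob_space)
qed

lemma Phi_bound:
  assumes "i \<in> {1..m}" "\<omega> \<in> space M" "l \<ge> 0" "\<sigma> = 1 \<or> \<sigma> = -1"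
  shows "\<bar>Phi m G i s \<sigma> (mu i) l (xt \<omega>) R\<bar> \<le> exp (l * R)"
proof -
  have W: "Wsum m G i s \<sigma> (mu i) (xt \<omega>) R \<le> R"
  proof -
    have "Wsum m G i s \<sigma> (mu i) (xt \<omega>) R \<le> (\<Sum>r\<in>{1..R}. 1)"
      unfolding Wsum_def
    proof (rule sum_mono)
      fix r
      have "xt \<omega> i r \<in> {0..1}" "mu i \<in> {0..1}" using xt_range[OF assms(2)] mu_range[OF assms(1)] by auto
      then show "(if condp m G i s (xt \<omega>) r then \<sigma> * (xt \<omega> i r - mu i) else 0) \<le> 1"
        using assms(4) by auto
    qed
    then show ?thesis by simp
  qed
  have K: "0 \<le> Ksum m G i s (xt \<omega>) R" unfolding Ksum_def by (intro sum_nonneg) auto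
  have "l * Wsum m G i s \<sigma> (mu i) (xt \<omega>) R - l^2/8 * Ksum m G i s (xt \<omega>) R \<le> l * R"
  proof -
    have "l * Wsum m G i s \<sigma> (mu i) (xt \<omega>) R \<le> l * R" by (rule mult_left_mono[OF W assms(3)])
    moreover have "0 \<le> l^2/8 * Ksum m G i s (xt \<omega>) R" using K by simp
    ultimately show ?thesis by linarith
  qed
  then show ?thesis unfolding Phi_def by simp
qed

lemma Phi_meas[measurable]: "(\<lambda>\<omega>. Phi m G i s \<sigma> \<mu> l (xt \<omega>) R) \<in> borel_measurable M"
  by (rule meas_Phi) (rule xt_meas)

lemma condp_meas[measurable]: "Measurable.pred M (\<lambda>\<omega>. condp m G i s (xt \<omega>) r)"
  by (rule meas_condp) (rule xt_meas)

lemma Phi_int: "i \<in> {1..m} \<Longrightarrow> l \<ge> 0 \<Longrightarrow> \<sigma> = 1 \<or> \<sigma> = -1 \<Longrightarrow>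
   integrable M (\<lambda>\<omega>. Phi m G i s \<sigma> (mu i) l (xt \<omega>) R)"
  by (rule bnd_int[where B="exp (l * R)"]) (auto intro: Phi_bound)


lemma e_int_le:
  assumes i: "i \<in> {1..m}" and \<sigma>: "\<sigma> = 1 \<or> \<sigma> = -1" and l: "l > 0" and t: "t \<in> {1..n}"
  shows "integral\<^sup>L M (\<lambda>\<omega>. exp (l * (\<sigma> * (xt \<omega> i t - mu i)) - l^2/8)) \<le> 1"
proof -
  define f where "f \<omega> = \<sigma> * xt \<omega> i t" for \<omega>
  have fm[measurable]: "f \<in> borel_measurable M" unfolding f_def by measurable
  have intx: "integrable M (\<lambda>\<omega>. xt \<omega> i t)"
    by (rule bnd_int[where B=1]) (use xt_range in \<open>auto\<close>)
  have ex: "integral\<^sup>L M (\<lambda>\<omega>. xt \<omega> i t) = mu i"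
  proof -
    have "integral\<^sup>L M (\<lambda>\<omega>. xt \<omega> i t) = integral\<^sup>L M (X i t)"
      by (rule Bochner_Integration.integral_cong) (use i t in \<open>auto simp: xt_def\<close>)
    then show ?thesis using Xmean[OF i t] by simp
  qed
  have Ef: "P.expectation f = \<sigma> * mu i" unfolding f_def using ex by simp
  have "integral\<^sup>L M (\<lambda>\<omega>. exp (l * (f \<omega> - P.expectation f))) \<le> exp (l^2/8)"
  proof (rule P.hoeff_int[OF fm, where a="if \<sigma> = 1 then 0 else -1" and b="if \<sigma> = 1 then 1 else 0"])
    fix \<omega> assume "\<omega> \<in> space M"
    then have "xt \<omega> i t \<in> {0..1}" by (rule xt_range)
    then show "f \<omega> \<in> {if \<sigma> = 1 then 0 else -1..if \<sigma> = 1 then 1 else 0}"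
      using \<sigma> unfolding f_def by auto
  qed (use l \<sigma> in auto)
  then have "integral\<^sup>L M (\<lambda>\<omega>. exp (l * (f \<omega> - P.expectation f))) / exp (l^2/8) \<le> 1"
    by simp
  also have "integral\<^sup>L M (\<lambda>\<omega>. exp (l * (f \<omega> - P.expectation f))) / exp (l^2/8)
      = integral\<^sup>L M (\<lambda>\<omega>. exp (l * (f \<omega> - P.expectation f)) / exp (l^2/8))"
    by simp
  also have "\<dots> = integral\<^sup>L M (\<lambda>\<omega>. exp (l * (\<sigma> * (xt \<omega> i t - mu i)) - l^2/8))"
    by (rule Bochner_Integration.integral_cong) (simp_all add: Ef f_def exp_diff mult_exp_exp algebra_simps)
  finally show ?thesis .
qed

lemma supermart:
  assumes i: "i \<in> {1..m}" and \<sigma>: "\<sigma> = 1 \<or> \<sigma> = -1" and l: "l > 0"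
  shows "R \<le> n \<Longrightarrow> integral\<^sup>L M (\<lambda>\<omega>. Phi m G i s \<sigma> (mu i) l (xt \<omega>) R) \<le> 1"
proof (induction R)
  case 0 then show ?case by (simp add: Phi_0 P.prob_space)
next
  case (Suc R)
  define F where "F \<omega> = Phi m G i s \<sigma> (mu i) l (xt \<omega>) R" for \<omega>
  define ind where "ind \<omega> = (if condp m G i s (xt \<omega>) (Suc R) then 1 else (0::real))" for \<omega>
  define e where "e \<omega> = exp (l * (\<sigma> * (xt \<omega> i (Suc R) - mu i)) - l^2/8)" for \<omega>
  have Feq: "F = (\<lambda>\<omega>. Phi m G i s \<sigma> (mu i) l (xt \<omega>) R)" by (simp add: fun_eq_iff F_def)
  have IH: "integral\<^sup>L M F \<le> 1" using Suc by (simp add: Feq)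
  have Fm[measurable]: "F \<in> borel_measurable M" unfolding F_def by measurable
  have im[measurable]: "ind \<in> borel_measurable M" unfolding ind_def by measurable
  have em[measurable]: "e \<in> borel_measurable M" unfolding e_def by measurable
  have Fb: "\<bar>F \<omega>\<bar> \<le> exp (l * R)" if "\<omega> \<in> space M" for \<omega>
    unfolding F_def using Phi_bound[OF i that _ \<sigma>] l by auto
  have eb: "\<bar>e \<omega>\<bar> \<le> exp l" if "\<omega> \<in> space M" for \<omega>
  proof -
    have "xt \<omega> i (Suc R) \<in> {0..1}" "mu i \<in> {0..1}" using xt_range[OF that] mu_range[OF i] by auto
    then have "\<sigma> * (xt \<omega> i (Suc R) - mu i) \<le> 1" using \<sigma> by auto
    then have "l * (\<sigma> * (xt \<omega> i (Suc R) - mu i)) - l^2/8 \<le> l"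
    proof -
      have "l * (\<sigma> * (xt \<omega> i (Suc R) - mu i)) \<le> l * 1"
        by (rule mult_left_mono) (use l \<open>\<sigma> * (xt \<omega> i (Suc R) - mu i) \<le> 1\<close> in auto)
      moreover have "0 \<le> l^2/8" by simp
      ultimately show ?thesis by linarith
    qed
    then show ?thesis unfolding e_def by simp
  qed
  have intF: "integrable M F" by (rule bnd_int[OF Fm Fb])
  have intFi: "integrable M (\<lambda>\<omega>. F \<omega> * ind \<omega>)"
    by (rule bnd_int[where B="exp (l * R)"]) (auto simp: ind_def Fb)
  have intFn: "integrable M (\<lambda>\<omega>. F \<omega> * (1 - ind \<omega>))"
    by (rule bnd_int[where B="exp (l * R)"]) (auto simp: ind_def Fb)
  have intFie: "integrable M (\<lambda>\<omega>. F \<omega> * ind \<omega> * e \<omega>)"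
  proof (rule bnd_int[where B="exp (l * R) * exp l"])
    fix \<omega> assume w: "\<omega> \<in> space M"
    have a: "\<bar>F \<omega> * ind \<omega>\<bar> \<le> exp (l * R)" using Fb[OF w] by (simp add: ind_def)
    have "\<bar>F \<omega> * ind \<omega> * e \<omega>\<bar> = \<bar>F \<omega> * ind \<omega>\<bar> * \<bar>e \<omega>\<bar>" by (simp add: abs_mult)
    also have "\<dots> \<le> exp (l * R) * exp l" by (rule mult_mono[OF a eb[OF w]]) auto
    finally show "\<bar>F \<omega> * ind \<omega> * e \<omega>\<bar> \<le> exp (l * R) * exp l" .
  qed simp
  have inte: "integrable M e" by (rule bnd_int[OF em eb])
  have eq: "Phi m G i s \<sigma> (mu i) l (xt \<omega>) (Suc R) = F \<omega> * (1 - ind \<omega>) + F \<omega> * ind \<omega> * e \<omega>" for \<omega>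
    by (simp add: Phi_Suc F_def ind_def e_def)
  have Suc_n: "Suc R \<in> {1..n}" using Suc.prems by auto
  define A where "A = {1..R}"
  define B where "B = {Suc R}"
  have ind0: "P.indep_var (PiM A (\<lambda>_. PiM {1..m} (\<lambda>_. borel))) (\<lambda>\<omega>. \<lambda>t\<in>A. (\<lambda>j\<in>{1..m}. X j t \<omega>))
                (PiM B (\<lambda>_. PiM {1..m} (\<lambda>_. borel))) (\<lambda>\<omega>. \<lambda>t\<in>B. (\<lambda>j\<in>{1..m}. X j t \<omega>))"
    unfolding A_def B_def using Suc.prems by (intro P.indep_var_restrict[OF Xindep]) auto
  define rc where "rc y = (\<lambda>j t. if j \<in> {1..m} \<and> t \<in> A then y t j else (0::real))"
    for y :: "nat \<Rightarrow> nat \<Rightarrow> real"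
  have comp_meas: "(\<lambda>y. y t j) \<in> borel_measurable (PiM C (\<lambda>_. PiM {1..m} (\<lambda>_. borel)))"
    if "t \<in> C" "j \<in> {1..m}" for t j and C :: "nat set"
  proof -
    have "(\<lambda>y. (\<lambda>z. z j) (y t)) \<in> borel_measurable (PiM C (\<lambda>_. PiM {1..m} (\<lambda>_. borel)))"
      by (rule measurable_compose[OF measurable_component_singleton[OF that(1)]
                                     measurable_component_singleton[OF that(2)]])
    then show ?thesis by simp
  qed
  have rc_meas: "(\<lambda>y. rc y j t) \<in> borel_measurable (PiM A (\<lambda>_. PiM {1..m} (\<lambda>_. borel)))" for j t
    unfolding rc_def using comp_meas[of t A j]
    by (cases "j \<in> {1..m} \<and> t \<in> A") auto
  define H1 where "H1 y = Phi m G i s \<sigma> (mu i) l (rc y) R * (if condp m G i s (rc y) (Suc R) then 1 else (0::real))"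
    for y
  define H2 where "H2 y = exp (l * (\<sigma> * (y (Suc R) i - mu i)) - l^2/8)" for y :: "nat \<Rightarrow> nat \<Rightarrow> real"
  have H1m: "H1 \<in> borel_measurable (PiM A (\<lambda>_. PiM {1..m} (\<lambda>_. borel)))"
  proof -
    note [measurable] = meas_Phi[OF rc_meas] meas_condp[OF rc_meas]
    show ?thesis unfolding H1_def by measurable
  qed
  have H2m: "H2 \<in> borel_measurable (PiM B (\<lambda>_. PiM {1..m} (\<lambda>_. borel)))"
  proof -
    note [measurable] = comp_meas[of "Suc R" B i] 
    have "Suc R \<in> B" by (simp add: B_def)
    then show ?thesis unfolding H2_def using i by measurable
  qed
  have indep: "P.indep_var borel (H1 \<circ> (\<lambda>\<omega>. \<lambda>t\<in>A. (\<lambda>j\<in>{1..m}. X j t \<omega>)))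
                          borel (H2 \<circ> (\<lambda>\<omega>. \<lambda>t\<in>B. (\<lambda>j\<in>{1..m}. X j t \<omega>)))"
    by (rule P.indep_var_compose[OF ind0 H1m H2m])
  have eq1: "(H1 \<circ> (\<lambda>\<omega>. \<lambda>t\<in>A. (\<lambda>j\<in>{1..m}. X j t \<omega>))) \<omega> = F \<omega> * ind \<omega>" if "\<omega> \<in> space M" for \<omega>
  proof -
    let ?y = "\<lambda>t\<in>A. (\<lambda>j\<in>{1..m}. X j t \<omega>)"
    have loc: "rc ?y j r = xt \<omega> j r" if "j \<in> {1..m}" "1 \<le> r" "r \<le> R" for j r
      using that Suc.prems by (simp add: rc_def A_def xt_def)
    have "Phi m G i s \<sigma> (mu i) l (rc ?y) R = F \<omega>"
      unfolding F_def by (rule Phi_local[OF i]) (use loc in auto)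
    moreover have "condp m G i s (rc ?y) (Suc R) = condp m G i s (xt \<omega>) (Suc R)"
      by (rule condp_local) (use loc in auto)
    ultimately show ?thesis by (simp add: H1_def ind_def)
  qed
  have eq2: "(H2 \<circ> (\<lambda>\<omega>. \<lambda>t\<in>B. (\<lambda>j\<in>{1..m}. X j t \<omega>))) \<omega> = e \<omega>" if "\<omega> \<in> space M" for \<omega>
    using i Suc_n by (simp add: H2_def e_def B_def xt_def)
  have int1: "integrable M (H1 \<circ> (\<lambda>\<omega>. \<lambda>t\<in>A. (\<lambda>j\<in>{1..m}. X j t \<omega>)))"
    using intFi by (subst Bochner_Integration.integrable_cong[OF refl eq1]) auto
  have int2: "integrable M (H2 \<circ> (\<lambda>\<omega>. \<lambda>t\<in>B. (\<lambda>j\<in>{1..m}. X j t \<omega>)))"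
    using inte by (subst Bochner_Integration.integrable_cong[OF refl eq2]) auto
  have "integral\<^sup>L M (\<lambda>\<omega>. F \<omega> * ind \<omega> * e \<omega>) =
        integral\<^sup>L M (\<lambda>\<omega>. (H1 \<circ> (\<lambda>\<omega>. \<lambda>t\<in>A. (\<lambda>j\<in>{1..m}. X j t \<omega>))) \<omega> *
                          (H2 \<circ> (\<lambda>\<omega>. \<lambda>t\<in>B. (\<lambda>j\<in>{1..m}. X j t \<omega>))) \<omega>)"
    by (rule Bochner_Integration.integral_cong) (use eq1 eq2 in auto)
  also have "\<dots> = integral\<^sup>L M (H1 \<circ> (\<lambda>\<omega>. \<lambda>t\<in>A. (\<lambda>j\<in>{1..m}. X j t \<omega>))) *
                  integral\<^sup>L M (H2 \<circ> (\<lambda>\<omega>. \<lambda>t\<in>B. (\<lambda>j\<in>{1..m}. X j t \<omega>)))"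
    by (rule P.indep_var_lebesgue_integral[OF indep int1 int2])
  also have "integral\<^sup>L M (H1 \<circ> (\<lambda>\<omega>. \<lambda>t\<in>A. (\<lambda>j\<in>{1..m}. X j t \<omega>))) = integral\<^sup>L M (\<lambda>\<omega>. F \<omega> * ind \<omega>)"
    by (rule Bochner_Integration.integral_cong) (use eq1 in auto)
  also have "integral\<^sup>L M (H2 \<circ> (\<lambda>\<omega>. \<lambda>t\<in>B. (\<lambda>j\<in>{1..m}. X j t \<omega>))) = integral\<^sup>L M e"
    by (rule Bochner_Integration.integral_cong) (use eq2 in auto)
  finally have prod: "integral\<^sup>L M (\<lambda>\<omega>. F \<omega> * ind \<omega> * e \<omega>) = integral\<^sup>L M (\<lambda>\<omega>. F \<omega> * ind \<omega>) * integral\<^sup>L M e" .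
  have e1: "integral\<^sup>L M e \<le> 1" unfolding e_def by (rule e_int_le[OF i \<sigma> l Suc_n])
  have Fi0: "0 \<le> integral\<^sup>L M (\<lambda>\<omega>. F \<omega> * ind \<omega>)"
    by (rule Bochner_Integration.integral_nonneg) (simp add: F_def Phi_def ind_def)
  have "integral\<^sup>L M (\<lambda>\<omega>. F \<omega> * ind \<omega> * e \<omega>) \<le> integral\<^sup>L M (\<lambda>\<omega>. F \<omega> * ind \<omega>)"
    unfolding prod using e1 Fi0 by (simp add: mult_left_le)
  then have "integral\<^sup>L M (\<lambda>\<omega>. Phi m G i s \<sigma> (mu i) l (xt \<omega>) (Suc R))
      \<le> integral\<^sup>L M (\<lambda>\<omega>. F \<omega> * (1 - ind \<omega>)) + integral\<^sup>L M (\<lambda>\<omega>. F \<omega> * ind \<omega>)"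
    unfolding eq using intFn intFie by (simp add: Bochner_Integration.integral_add)
  also have "\<dots> = integral\<^sup>L M F"
    using intFn intFi by (simp add: Bochner_Integration.integral_add[symmetric] algebra_simps)
  finally show ?case using IH by simp
qed

lemma conc:
  assumes i: "i \<in> {1..m}" and \<sigma>: "\<sigma> = 1 \<or> \<sigma> = -1" and s: "1 \<le> s" and c: "c > 0" and R: "R \<le> n"
  shows "P.prob {\<omega>\<in>space M. plays (ucb_hist m G (xt \<omega>) R) i = s \<and>
            c \<le> \<sigma> * (emp_mean (xt \<omega>) (ucb_hist m G (xt \<omega>) R) i - mu i)} \<le> exp (- (2 * real s * c^2))"
proof -
  define E where "E = {\<omega>\<in>space M. plays (ucb_hist m G (xt \<omega>) R) i = s \<and>
            c \<le> \<sigma> * (emp_mean (xt \<omega>) (ucb_hist m G (xt \<omega>) R) i - mu i)}"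
  define l where "l = 4 * c"
  have l: "l > 0" using c by (simp add: l_def)
  define Q where "Q h \<omega> = (plays h i = s \<and> c \<le> \<sigma> * (emp_mean (xt \<omega>) h i - mu i))" for h \<omega>
  have Qm: "Measurable.pred M (Q h)" for h
    unfolding Q_def emp_mean_def by measurable
  have "Measurable.pred M (\<lambda>\<omega>. Q (ucb_hist m G (xt \<omega>) R) \<omega>)"
    by (rule measurable_compose_countable[OF Qm meas_hist[where x=xt, OF xt_meas]])
  then have Em: "E \<in> sets M" unfolding E_def Q_def by measurable
  have bound: "indicator E \<omega> \<le> Phi m G i s \<sigma> (mu i) l (xt \<omega>) R * exp (- (2 * real s * c^2))"
    if "\<omega> \<in> space M" for \<omega>
  proof (cases "\<omega> \<in> E")
    case True
    then have p: "plays (ucb_hist m G (xt \<omega>) R) i = s"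
      and ce: "c \<le> \<sigma> * (emp_mean (xt \<omega>) (ucb_hist m G (xt \<omega>) R) i - mu i)" unfolding E_def by auto
    have "Phi m G i s \<sigma> (mu i) l (xt \<omega>) R
        = exp (l * (s * \<sigma> * (emp_mean (xt \<omega>) (ucb_hist m G (xt \<omega>) R) i - mu i)) - l^2/8 * s)"
      unfolding Phi_def KW[OF p s] ..
    also have "\<dots> \<ge> exp (l * (s * c) - l^2/8 * s)"
      using ce l s by (simp add: mult_left_mono mult.assoc)
    finally have "exp (l * (s * c) - l^2/8 * s) \<le> Phi m G i s \<sigma> (mu i) l (xt \<omega>) R" .
    moreover have "l * (s * c) - l^2/8 * s = 2 * real s * c^2" by (simp add: l_def power2_eq_square algebra_simps)
    ultimately have "exp (2 * real s * c^2) \<le> Phi m G i s \<sigma> (mu i) l (xt \<omega>) R" by simp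
    then have "exp (2 * real s * c^2) * exp (- (2 * real s * c^2)) \<le> Phi m G i s \<sigma> (mu i) l (xt \<omega>) R * exp (- (2 * real s * c^2))"
      by (simp add: mult_right_mono)
    then show ?thesis using True by (simp add: mult_exp_exp)
  next
    case False
    then show ?thesis by (simp add: Phi_def)
  qed
  have intE: "integrable M (indicator E :: 'a \<Rightarrow> real)"
    by (rule bnd_int[where B=1]) (use Em in \<open>auto simp: indicator_def\<close>)
  have "P.prob E = integral\<^sup>L M (indicator E)" using Em by (simp add: Int_absorb2 sets.sets_into_space)
  also have "\<dots> \<le> integral\<^sup>L M (\<lambda>\<omega>. Phi m G i s \<sigma> (mu i) l (xt \<omega>) R * exp (- (2 * real s * c^2)))"
    by (rule integral_mono) (use intE Em Phi_int[OF i _ \<sigma>, of l s R] l bound in auto)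
  also have "\<dots> = integral\<^sup>L M (\<lambda>\<omega>. Phi m G i s \<sigma> (mu i) l (xt \<omega>) R) * exp (- (2 * real s * c^2))" by simp
  also have "\<dots> \<le> exp (- (2 * real s * c^2))"
    using supermart[OF i \<sigma> l R] by (simp add: mult_left_le_one_le)
  finally show ?thesis unfolding E_def .
qed


lemma arm_meas[measurable]: "(\<lambda>\<omega>. ucb_arm m G (xt \<omega>) t) \<in> M \<rightarrow>\<^sub>M count_space UNIV"
proof -
  have "(\<lambda>\<omega>. (\<lambda>h. h ! (t - 1)) (ucb_hist m G (xt \<omega>) t)) \<in> M \<rightarrow>\<^sub>M count_space UNIV"
    by (rule measurable_compose[OF meas_hist[where x=xt, OF xt_meas] measurable_count_space])
  then show ?thesis by (simp add: ucb_arm_def)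
qed

lemma Aev_meas[measurable]: "Measurable.pred M (\<lambda>\<omega>. Aev m G (xt \<omega>) i t s \<sigma> \<mu>)"
proof -
  define Q where "Q h \<omega> = (plays h i = s \<and> sqrt (2 * ln (xi G t) / real s) \<le> \<sigma> * (emp_mean (xt \<omega>) h i - \<mu>))" for h \<omega>
  have Qm: "Measurable.pred M (Q h)" for h
    unfolding Q_def emp_mean_def by measurable
  have "Measurable.pred M (\<lambda>\<omega>. Q (ucb_hist m G (xt \<omega>) (t - 1)) \<omega>)"
    by (rule measurable_compose_countable[OF Qm meas_hist[where x=xt, OF xt_meas]])
  then show ?thesis unfolding Q_def Aev_def by simp
qed

lemma ind_int: "integrable M (\<lambda>\<omega>. if Aev m G (xt \<omega>) i t s \<sigma> \<mu> then 1 else 0 :: real)"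
  by (rule bnd_int[where B=1]) auto

lemma xi_gt1: "t \<in> {1..n} \<Longrightarrow> 1 < xi G t"
  using Gpos[of t] by (auto simp: xi_def)

lemma Aev_prob:
  assumes i: "i \<in> {1..m}" and \<sigma>: "\<sigma> = 1 \<or> \<sigma> = -1" and s: "1 \<le> s" and t: "t \<in> {1..n}"
  shows "integral\<^sup>L M (\<lambda>\<omega>. if Aev m G (xt \<omega>) i t s \<sigma> (mu i) then 1 else 0 :: real) \<le> xi G t powr -4"
proof -
  define E where "E = {\<omega>\<in>space M. Aev m G (xt \<omega>) i t s \<sigma> (mu i)}"
  define c where "c = sqrt (2 * ln (xi G t) / real s)"
  have lnp: "0 < ln (xi G t)" using xi_gt1[OF t] by simp
  have c0: "0 < c" unfolding c_def using lnp s by simp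
  have "integral\<^sup>L M (\<lambda>\<omega>. if Aev m G (xt \<omega>) i t s \<sigma> (mu i) then 1 else 0 :: real) = integral\<^sup>L M (indicator E)"
    by (rule Bochner_Integration.integral_cong) (auto simp: E_def indicator_def)
  also have "\<dots> = P.prob E" by (simp add: E_def Int_absorb2)
  also have "E = {\<omega>\<in>space M. plays (ucb_hist m G (xt \<omega>) (t - 1)) i = s \<and>
            c \<le> \<sigma> * (emp_mean (xt \<omega>) (ucb_hist m G (xt \<omega>) (t - 1)) i - mu i)}"
    unfolding E_def Aev_def c_def ..
  also have "P.prob \<dots> \<le> exp (- (2 * real s * c^2))"
    by (rule conc[OF i \<sigma> s c0]) (use t in auto)
  also have "2 * real s * c^2 = 4 * ln (xi G t)"
    unfolding c_def using lnp s by simp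
  also have "exp (- (4 * ln (xi G t))) = xi G t powr -4"
    using xi_gt1[OF t] by (simp add: powr_def)
  finally show ?thesis .
qed

lemma regret_local:
  assumes "\<omega> \<in> space M"
  shows "regret m n G mu (\<lambda>j t. X j t \<omega>) = regret m n G mu (xt \<omega>)"
proof -
  have "ucb_arm m G (\<lambda>j t. X j t \<omega>) t = ucb_arm m G (xt \<omega>) t" if "t \<in> {1..n}" for t
    unfolding ucb_arm_def using that by (subst hist_local[of m t _ "xt \<omega>"]) (auto simp: xt_def)
  then show ?thesis unfolding regret_def by (intro sum.cong) auto
qed

lemma regret_meas: "(\<lambda>\<omega>. regret m n G mu (xt \<omega>)) \<in> borel_measurable M"
  unfolding regret_def by measurable



definition Bf :: "nat \<Rightarrow> nat \<Rightarrow> (nat \<Rightarrow> nat \<Rightarrow> real) \<Rightarrow> real" where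
  "Bf istar j x = (\<Sum>t\<in>{m+1..n}.
      (\<Sum>s\<in>{1..t-m-1}. if Aev m G x istar t s (-1) (mu istar) then 1 else 0) +
      (\<Sum>s\<in>{2..t-m}. if Aev m G x j t s 1 (mu j) then 1 else 0))"

lemma pointwise:
  assumes m1: "1 \<le> m" and istar: "istar \<in> {1..m}" and Mx: "mu istar = Max (mu ` {1..m})"
    and Gm: "\<And>t. t \<in> {m+1..n} \<Longrightarrow> G t \<le> Gm" and Gm0: "0 \<le> Gm"
    and Lx: "\<And>t. t \<in> {m+1..n} \<Longrightarrow> ln (xi G t) \<le> Lx"
    and hell: "\<And>j. j \<in> {1..m} \<Longrightarrow> mu j < mu istar \<Longrightarrow> 8 * Lx / (mu istar - mu j)^2 \<le> real (ell j)"
    and hell2: "\<And>j. 2 \<le> ell j"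
  shows "regret m n G mu x \<le> (\<Sum>j\<in>{1..m}. G j * (mu istar - mu j))
      + Gm * (\<Sum>j\<in>{j\<in>{1..m}. mu j < mu istar}. (mu istar - mu j) * (real (ell j - 1) + Bf istar j x))"
proof -
  define D where "D j = mu istar - mu j" for j
  define Sub where "Sub = {j\<in>{1..m}. mu j < mu istar}"
  define ind where "ind t j = (if ucb_arm m G x t = j then 1 else 0 :: real)" for t j
  have Dnn: "0 \<le> D j" if "j \<in> {1..m}" for j
    unfolding D_def Mx using that by (simp add: Max_ge)
  have un: "{1..n} = {1..m} \<union> {m+1..n}" using mn by auto
  have R0: "regret m n G mu x = (\<Sum>t\<in>{1..m}. \<Sum>j\<in>{1..m}. D j * G t * ind t j)
                                + (\<Sum>t\<in>{m+1..n}. \<Sum>j\<in>{1..m}. D j * G t * ind t j)"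
    unfolding regret_def D_def ind_def Mx[symmetric] un by (rule sum.union_disjoint) auto
  have first: "(\<Sum>t\<in>{1..m}. \<Sum>j\<in>{1..m}. D j * G t * ind t j) = (\<Sum>j\<in>{1..m}. G j * D j)"
  proof (rule sum.cong[OF refl])
    fix t assume t: "t \<in> {1..m}"
    have "ucb_arm m G x t = t"
    proof -
      have "t = Suc (t - 1)" using t by auto
      then have "ucb_arm m G x t = ucb_choice m G x (ucb_hist m G x (t - 1))" by (metis arm_Suc)
      also have "\<dots> = t"
      proof -
        have "length (ucb_hist m G x (t - 1)) < m" using t by auto
        then show ?thesis using t by (simp only: choice_init) auto
      qed
      finally show ?thesis .
    qed
    then have "(\<Sum>j\<in>{1..m}. D j * G t * ind t j) = (\<Sum>j\<in>{1..m}. if j = t then D t * G t else 0)"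
      by (intro sum.cong) (auto simp: ind_def)
    also have "\<dots> = D t * G t" using t by (simp add: sum.delta)
    finally show "(\<Sum>j\<in>{1..m}. D j * G t * ind t j) = G t * D t" by simp
  qed
  define N where "N j = (\<Sum>t\<in>{m+1..n}. ind t j)" for j
  have second: "(\<Sum>t\<in>{m+1..n}. \<Sum>j\<in>{1..m}. D j * G t * ind t j) \<le> Gm * (\<Sum>j\<in>Sub. D j * N j)"
  proof -
    have "(\<Sum>t\<in>{m+1..n}. \<Sum>j\<in>{1..m}. D j * G t * ind t j) \<le> (\<Sum>t\<in>{m+1..n}. \<Sum>j\<in>{1..m}. D j * Gm * ind t j)"
    proof (intro sum_mono)
      fix t j assume t: "t \<in> {m+1..n}" and j: "j \<in> {1..m}"
      have "0 \<le> D j * ind t j" using Dnn[OF j] by (simp add: ind_def)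
      then have "(D j * ind t j) * G t \<le> (D j * ind t j) * Gm" by (rule mult_left_mono[OF Gm[OF t]])
      then show "D j * G t * ind t j \<le> D j * Gm * ind t j" by (simp add: algebra_simps)
    qed
    also have "\<dots> = (\<Sum>j\<in>{1..m}. \<Sum>t\<in>{m+1..n}. D j * Gm * ind t j)"
      by (rule sum.swap)
    also have "\<dots> = (\<Sum>j\<in>{1..m}. Gm * (D j * N j))"
      unfolding N_def by (intro sum.cong refl) (simp add: sum_distrib_left mult_ac)
    also have "\<dots> = Gm * (\<Sum>j\<in>{1..m}. D j * N j)"
      by (simp add: sum_distrib_left)
    also have "(\<Sum>j\<in>{1..m}. D j * N j) = (\<Sum>j\<in>Sub. D j * N j)"
    proof (rule sum.mono_neutral_right)
      show "\<forall>i\<in>{1..m} - Sub. D i * N i = 0"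
      proof
        fix i assume i: "i \<in> {1..m} - Sub"
        then have "mu i \<le> mu istar" unfolding Mx by (intro Max_ge) auto
        moreover have "\<not> mu i < mu istar" using i by (auto simp: Sub_def)
        ultimately have "D i = 0" by (simp add: D_def)
        then show "D i * N i = 0" by simp
      qed
    qed (auto simp: Sub_def)
    finally show ?thesis .
  qed
  have third: "N j \<le> real (ell j - 1) + Bf istar j x" if j: "j \<in> Sub" for j
  proof -
    have jm: "j \<in> {1..m}" and jlt: "mu j < mu istar" using j by (auto simp: Sub_def)
    have "N j \<le> real (ell j - 1) + (\<Sum>t\<in>{m+1..n}. if ucb_arm m G x t = j \<and> ell j \<le> plays (ucb_hist m G x (t - 1)) j then 1 else 0)"
      unfolding N_def ind_def by (rule count_plays[OF m1]) (use hell2[of j] in auto)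
    also have "(\<Sum>t\<in>{m+1..n}. if ucb_arm m G x t = j \<and> ell j \<le> plays (ucb_hist m G x (t - 1)) j then 1 else 0) \<le> Bf istar j x"
      unfolding Bf_def
    proof (rule sum_mono)
      fix t assume t: "t \<in> {m+1..n}"
      define SA where "SA = (\<Sum>s\<in>{1..t-m-1}. if Aev m G x istar t s (-1) (mu istar) then 1 else 0 :: real)"
      define SB where "SB = (\<Sum>s\<in>{2..t-m}. if Aev m G x j t s 1 (mu j) then 1 else 0 :: real)"
      have SA0: "0 \<le> SA" unfolding SA_def by (intro sum_nonneg) auto
      have SB0: "0 \<le> SB" unfolding SB_def by (intro sum_nonneg) auto
      have "(if ucb_arm m G x t = j \<and> ell j \<le> plays (ucb_hist m G x (t - 1)) j then 1 else 0) \<le> SA + SB"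
      proof (cases "ucb_arm m G x t = j \<and> ell j \<le> plays (ucb_hist m G x (t - 1)) j")
        case True
        have t1: "t \<in> {1..n}" using t by auto
        have "(\<exists>s\<in>{1..t-m-1}. Aev m G x istar t s (-1) (mu istar)) \<or> (\<exists>s\<in>{2..t-m}. Aev m G x j t s 1 (mu j))"
        proof (rule bad_event[OF m1 _ istar jm jlt _ Lx[OF t] hell[OF jm jlt] hell2])
          show "m < t" using t by auto
          show "0 < ln (xi G t)" using xi_gt1[OF t1] by simp
        qed (use True in auto)
        then show ?thesis
        proof
          assume "\<exists>s\<in>{1..t-m-1}. Aev m G x istar t s (-1) (mu istar)"
          then obtain s where s: "s \<in> {1..t-m-1}" "Aev m G x istar t s (-1) (mu istar)" by auto
          have "(if Aev m G x istar t s (-1) (mu istar) then 1 else 0 :: real) \<le> SA"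
            unfolding SA_def by (rule member_le_sum[OF s(1)]) auto
          then show ?thesis using s(2) SB0 True by simp
        next
          assume "\<exists>s\<in>{2..t-m}. Aev m G x j t s 1 (mu j)"
          then obtain s where s: "s \<in> {2..t-m}" "Aev m G x j t s 1 (mu j)" by auto
          have "(if Aev m G x j t s 1 (mu j) then 1 else 0 :: real) \<le> SB"
            unfolding SB_def by (rule member_le_sum[OF s(1)]) auto
          then show ?thesis using s(2) SA0 True by simp
        qed
      next
        case False
        then have "(if ucb_arm m G x t = j \<and> ell j \<le> plays (ucb_hist m G x (t - 1)) j then 1 else 0) = (0::real)"
          by (rule if_not_P)
        then show ?thesis using SA0 SB0 by linarith
      qed
      then show "(if ucb_arm m G x t = j \<and> ell j \<le> plays (ucb_hist m G x (t - 1)) j then 1 else (0::real))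
          \<le> (\<Sum>s\<in>{1..t-m-1}. if Aev m G x istar t s (-1) (mu istar) then 1 else 0) +
             (\<Sum>s\<in>{2..t-m}. if Aev m G x j t s 1 (mu j) then 1 else 0)"
        unfolding SA_def SB_def .
    qed
    finally show ?thesis by simp
  qed
  have "(\<Sum>j\<in>Sub. D j * N j) \<le> (\<Sum>j\<in>Sub. D j * (real (ell j - 1) + Bf istar j x))"
  proof (rule sum_mono)
    fix j assume j: "j \<in> Sub"
    then have "0 \<le> D j" using Dnn by (auto simp: Sub_def)
    then show "D j * N j \<le> D j * (real (ell j - 1) + Bf istar j x)"
      using third[OF j] by (rule mult_left_mono[rotated])
  qed
  then have "Gm * (\<Sum>j\<in>Sub. D j * N j) \<le> Gm * (\<Sum>j\<in>Sub. D j * (real (ell j - 1) + Bf istar j x))"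
    using Gm0 by (rule mult_left_mono)
  then show ?thesis using R0 first second unfolding D_def Sub_def by (simp add: mult.commute)
qed



lemma main:
  assumes m1: "1 \<le> m"
  shows "integral\<^sup>L M (\<lambda>\<omega>. regret m n G mu (\<lambda>j t. X j t \<omega>))
    \<le> (\<Sum>j\<in>{1..m}. G j * (Max (mu ` {1..m}) - mu j))
      + Max (G ` {m+1..n}) *
        ((\<Sum>j\<in>{j\<in>{1..m}. mu j < Max (mu ` {1..m})}.
            8 / (Max (mu ` {1..m}) - mu j) * ln (Max (xi G ` {m+1..n})))
         + (\<Sum>j\<in>{1..m}. (Max (mu ` {1..m}) - mu j) *
              (1 + (\<Sum>t\<in>{m+1..n}. 2 * (xi G t) powr (-4) * (real t - 1 - real m)^2))))"
proof -
  define Mx where "Mx = Max (mu ` {1..m})"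
  obtain istar where istar: "istar \<in> {1..m}" "mu istar = Mx"
  proof -
    have "Mx \<in> mu ` {1..m}" unfolding Mx_def using m1 by (intro Max_in) auto
    then show ?thesis using that by auto
  qed
  define Gm where "Gm = Max (G ` {m+1..n})"
  define Lx where "Lx = ln (Max (xi G ` {m+1..n}))"
  define Sub where "Sub = {j\<in>{1..m}. mu j < Mx}"
  define ell where "ell j = max 2 (nat \<lceil>8 * Lx / (Mx - mu j)^2\<rceil>)" for j
  define D where "D j = Mx - mu j" for j
  define S1 where "S1 = (\<Sum>t\<in>{m+1..n}. 2 * real (t - m - 1) * xi G t powr -4)"
  define S2 where "S2 = (\<Sum>t\<in>{m+1..n}. 2 * (xi G t) powr (-4) * (real t - 1 - real m)^2)"
  define C0 where "C0 = (\<Sum>j\<in>{1..m}. G j * (Mx - mu j))"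
  have mn1: "m + 1 \<in> {m+1..n}" using mn by auto
  have Gm: "G t \<le> Gm" if "t \<in> {m+1..n}" for t unfolding Gm_def using that by (intro Max_ge) auto
  have Gm0: "0 \<le> Gm" using Gm[OF mn1] Gpos[of "m+1"] mn by auto
  have Lx: "ln (xi G t) \<le> Lx" if t: "t \<in> {m+1..n}" for t
  proof -
    have "xi G t \<le> Max (xi G ` {m+1..n})" using t by (intro Max_ge) auto
    moreover have "0 < xi G t" using xi_gt1[of t] t by auto
    ultimately show ?thesis unfolding Lx_def by simp
  qed
  have Lx0: "0 \<le> Lx"
  proof -
    have "0 < ln (xi G (m+1))" using xi_gt1[of "m+1"] mn by auto
    then show ?thesis using Lx[OF mn1] by linarith
  qed
  have Dnn: "0 \<le> D j" if "j \<in> {1..m}" for j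
    unfolding D_def Mx_def using that by (simp add: Max_ge)
  have hell: "8 * Lx / (mu istar - mu j)^2 \<le> real (ell j)" for j
  proof -
    have "8 * Lx / (mu istar - mu j)^2 \<le> real (nat \<lceil>8 * Lx / (Mx - mu j)^2\<rceil>)"
      using istar(2) real_nat_ceiling_ge by simp
    also have "\<dots> \<le> real (ell j)" unfolding ell_def by simp
    finally show ?thesis .
  qed
  have hell2: "2 \<le> ell j" for j by (simp add: ell_def)
  have hell3: "real (ell j - 1) \<le> 8 * Lx / (D j)^2 + 1" for j
  proof -
    define y where "y = 8 * Lx / (D j)^2"
    have y0: "0 \<le> y" unfolding y_def using Lx0 by simp
    have c0: "0 \<le> \<lceil>y\<rceil>" using y0 by simp
    have "real (nat \<lceil>y\<rceil>) = of_int \<lceil>y\<rceil>" using c0 by simp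
    also have "\<dots> \<le> y + 1" by simp
    finally have a: "real (nat \<lceil>y\<rceil>) \<le> y + 1" .
    have e: "real (ell j) = max 2 (real (nat \<lceil>y\<rceil>))"
      unfolding ell_def D_def[symmetric] y_def[symmetric] by simp
    have "max 2 (real (nat \<lceil>y\<rceil>)) \<le> y + 2" using a y0 by (intro max.boundedI) linarith+
    then have "real (ell j) \<le> y + 2" unfolding e .
    moreover have "real (ell j - 1) = real (ell j) - 1" using hell2[of j] by (simp add: of_nat_diff)
    ultimately show ?thesis unfolding y_def by simp
  qed
  define Z where "Z \<omega> = C0 + Gm * (\<Sum>j\<in>Sub. D j * (real (ell j - 1) + Bf istar j (xt \<omega>)))" for \<omega>
  have pw: "regret m n G mu (\<lambda>j t. X j t \<omega>) \<le> Z \<omega>" if w: "\<omega> \<in> space M" for \<omega>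
  proof -
    have "regret m n G mu (xt \<omega>) \<le> (\<Sum>j\<in>{1..m}. G j * (mu istar - mu j))
      + Gm * (\<Sum>j\<in>{j\<in>{1..m}. mu j < mu istar}. (mu istar - mu j) * (real (ell j - 1) + Bf istar j (xt \<omega>)))"
      by (rule pointwise[OF m1 istar(1) _ Gm Gm0 Lx hell hell2]) (simp_all add: istar(2) Mx_def)
    then show ?thesis using regret_local[OF w]
      unfolding Z_def C0_def D_def Sub_def istar(2) by simp
  qed
  have intB: "integrable M (\<lambda>\<omega>. Bf istar j (xt \<omega>))" for j
    unfolding Bf_def by (intro Bochner_Integration.integrable_sum Bochner_Integration.integrable_add ind_int)
  have intS: "integrable M (\<lambda>\<omega>. \<Sum>j\<in>Sub. D j * (real (ell j - 1) + Bf istar j (xt \<omega>)))"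
    by (intro Bochner_Integration.integrable_sum Bochner_Integration.integrable_mult_right Bochner_Integration.integrable_add P.integrable_const intB)
  have intZ: "integrable M Z"
    unfolding Z_def by (intro Bochner_Integration.integrable_add P.integrable_const Bochner_Integration.integrable_mult_right intS)
  have intR: "integrable M (\<lambda>\<omega>. regret m n G mu (\<lambda>j t. X j t \<omega>))"
  proof -
    have "integrable M (\<lambda>\<omega>. regret m n G mu (xt \<omega>))"
    proof (rule bnd_int[OF regret_meas])
      fix \<omega> assume "\<omega> \<in> space M"
      have "\<bar>regret m n G mu (xt \<omega>)\<bar> \<le> (\<Sum>t\<in>{1..n}. \<bar>\<Sum>j\<in>{1..m}. (Max (mu ` {1..m}) - mu j) * G t *
              (if ucb_arm m G (xt \<omega>) t = j then 1 else 0)\<bar>)"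
        unfolding regret_def by (rule sum_abs)
      also have "\<dots> \<le> (\<Sum>t\<in>{1..n}. \<Sum>j\<in>{1..m}. \<bar>(Max (mu ` {1..m}) - mu j) * G t\<bar>)"
      proof (rule sum_mono)
        fix t
        have "\<bar>\<Sum>j\<in>{1..m}. (Max (mu ` {1..m}) - mu j) * G t * (if ucb_arm m G (xt \<omega>) t = j then 1 else 0)\<bar>
            \<le> (\<Sum>j\<in>{1..m}. \<bar>(Max (mu ` {1..m}) - mu j) * G t * (if ucb_arm m G (xt \<omega>) t = j then 1 else 0)\<bar>)"
          by (rule sum_abs)
        also have "\<dots> \<le> (\<Sum>j\<in>{1..m}. \<bar>(Max (mu ` {1..m}) - mu j) * G t\<bar>)"
          by (rule sum_mono) (simp add: abs_mult)
        finally show "\<bar>\<Sum>j\<in>{1..m}. (Max (mu ` {1..m}) - mu j) * G t * (if ucb_arm m G (xt \<omega>) t = j then 1 else 0)\<bar>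
            \<le> (\<Sum>j\<in>{1..m}. \<bar>(Max (mu ` {1..m}) - mu j) * G t\<bar>)" .
      qed
      finally show "\<bar>regret m n G mu (xt \<omega>)\<bar> \<le> (\<Sum>t\<in>{1..n}. \<Sum>j\<in>{1..m}. \<bar>(Max (mu ` {1..m}) - mu j) * G t\<bar>)" .
    qed
    then show ?thesis
      by (subst Bochner_Integration.integrable_cong[OF refl regret_local]) auto
  qed
  have EB: "integral\<^sup>L M (\<lambda>\<omega>. Bf istar j (xt \<omega>)) \<le> S1" if j: "j \<in> {1..m}" for j
  proof -
    have "integral\<^sup>L M (\<lambda>\<omega>. Bf istar j (xt \<omega>)) =
      (\<Sum>t\<in>{m+1..n}.
        (\<Sum>s\<in>{1..t-m-1}. integral\<^sup>L M (\<lambda>\<omega>. if Aev m G (xt \<omega>) istar t s (-1) (mu istar) then 1 else 0)) +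
        (\<Sum>s\<in>{2..t-m}. integral\<^sup>L M (\<lambda>\<omega>. if Aev m G (xt \<omega>) j t s 1 (mu j) then 1 else 0)))"
      unfolding Bf_def
      by (simp add: Bochner_Integration.integral_sum Bochner_Integration.integral_add ind_int
             Bochner_Integration.integrable_sum)
    also have "\<dots> \<le> S1"
      unfolding S1_def
    proof (rule sum_mono)
      fix t assume t: "t \<in> {m+1..n}"
      have t1: "t \<in> {1..n}" using t by auto
      have a: "(\<Sum>s\<in>{1..t-m-1}. integral\<^sup>L M (\<lambda>\<omega>. if Aev m G (xt \<omega>) istar t s (-1) (mu istar) then 1 else 0))
          \<le> (\<Sum>s\<in>{1..t-m-1}. xi G t powr -4)"
        by (rule sum_mono) (rule Aev_prob[OF istar(1) _ _ t1], auto)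
      have b: "(\<Sum>s\<in>{2..t-m}. integral\<^sup>L M (\<lambda>\<omega>. if Aev m G (xt \<omega>) j t s 1 (mu j) then 1 else 0))
          \<le> (\<Sum>s\<in>{2..t-m}. xi G t powr -4)"
        by (rule sum_mono) (rule Aev_prob[OF j _ _ t1], auto)
      have c1: "card {1..t-m-1} = t - m - 1" by simp
      have c2: "card {2..t-m} = t - m - 1" using t by simp
      show "(\<Sum>s\<in>{1..t-m-1}. integral\<^sup>L M (\<lambda>\<omega>. if Aev m G (xt \<omega>) istar t s (-1) (mu istar) then 1 else 0)) +
        (\<Sum>s\<in>{2..t-m}. integral\<^sup>L M (\<lambda>\<omega>. if Aev m G (xt \<omega>) j t s 1 (mu j) then 1 else 0))
        \<le> 2 * real (t - m - 1) * xi G t powr -4"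
        using a b c1 c2 by simp
    qed
    finally show ?thesis .
  qed
  have EZ: "integral\<^sup>L M Z = C0 + Gm * (\<Sum>j\<in>Sub. D j * (real (ell j - 1) + integral\<^sup>L M (\<lambda>\<omega>. Bf istar j (xt \<omega>))))"
  proof -
    have "integral\<^sup>L M Z = C0 + Gm * integral\<^sup>L M (\<lambda>\<omega>. \<Sum>j\<in>Sub. D j * (real (ell j - 1) + Bf istar j (xt \<omega>)))"
      unfolding Z_def using intS by (simp add: Bochner_Integration.integral_add P.prob_space)
    also have "integral\<^sup>L M (\<lambda>\<omega>. \<Sum>j\<in>Sub. D j * (real (ell j - 1) + Bf istar j (xt \<omega>)))
        = (\<Sum>j\<in>Sub. D j * (real (ell j - 1) + integral\<^sup>L M (\<lambda>\<omega>. Bf istar j (xt \<omega>))))"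
      using intB by (simp add: Bochner_Integration.integral_sum Bochner_Integration.integral_add P.prob_space
           integrable_mult_right)
    finally show ?thesis .
  qed
  have S12: "S1 \<le> S2"
    unfolding S1_def S2_def
  proof (rule sum_mono)
    fix t assume t: "t \<in> {m+1..n}"
    define k where "k = t - m - 1"
    have rk: "real t - 1 - real m = real k" using t by (simp add: k_def of_nat_diff)
    have hk: "real k \<le> (real k)^2"
      by (cases k) (auto simp: power2_eq_square)
    have h: "real k * xi G t powr -4 \<le> (real k)^2 * xi G t powr -4"
      by (rule mult_right_mono[OF hk]) simp
    then show "2 * real (t - m - 1) * xi G t powr -4 \<le> 2 * xi G t powr -4 * (real t - 1 - real m)^2"
      unfolding rk k_def[symmetric] by (simp add: mult_ac)
  qed
  have S20: "0 \<le> S2" unfolding S2_def by (intro sum_nonneg) simp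
  have perj: "D j * (real (ell j - 1) + integral\<^sup>L M (\<lambda>\<omega>. Bf istar j (xt \<omega>))) \<le> 8 / D j * Lx + D j * (1 + S2)"
    if j: "j \<in> Sub" for j
  proof -
    have jm: "j \<in> {1..m}" and Dp: "0 < D j" using j by (auto simp: Sub_def D_def)
    have "D j * real (ell j - 1) \<le> D j * (8 * Lx / (D j)^2 + 1)"
      using hell3[of j] Dp by (simp add: mult_left_mono)
    also have "\<dots> = 8 / D j * Lx + D j" using Dp by (simp add: field_simps power2_eq_square)
    finally have a: "D j * real (ell j - 1) \<le> 8 / D j * Lx + D j" .
    have "D j * integral\<^sup>L M (\<lambda>\<omega>. Bf istar j (xt \<omega>)) \<le> D j * S2"
      using EB[OF jm] S12 Dp by (simp add: mult_left_mono)
    with a show ?thesis by (simp add: algebra_simps)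
  qed
  have "integral\<^sup>L M (\<lambda>\<omega>. regret m n G mu (\<lambda>j t. X j t \<omega>)) \<le> integral\<^sup>L M Z"
    by (rule integral_mono[OF intR intZ pw])
  also have "\<dots> \<le> C0 + Gm * (\<Sum>j\<in>Sub. 8 / D j * Lx + D j * (1 + S2))"
    unfolding EZ using Gm0 by (intro add_left_mono mult_left_mono sum_mono perj)
  also have "(\<Sum>j\<in>Sub. 8 / D j * Lx + D j * (1 + S2)) = (\<Sum>j\<in>Sub. 8 / D j * Lx) + (\<Sum>j\<in>Sub. D j * (1 + S2))"
    by (rule sum.distrib)
  also have "(\<Sum>j\<in>Sub. D j * (1 + S2)) \<le> (\<Sum>j\<in>{1..m}. D j * (1 + S2))"
    by (rule sum_mono2) (use Dnn S20 in \<open>auto simp: Sub_def\<close>)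
  finally have fin: "integral\<^sup>L M (\<lambda>\<omega>. regret m n G mu (\<lambda>j t. X j t \<omega>))
      \<le> C0 + Gm * ((\<Sum>j\<in>Sub. 8 / D j * Lx) + (\<Sum>j\<in>{1..m}. D j * (1 + S2)))"
    using Gm0 by (smt (verit) mult_left_mono)
  show ?thesis using fin unfolding C0_def Gm_def Sub_def D_def Lx_def S2_def Mx_def .
qed

end


theorem theorem3p4:
  fixes M :: "'a measure" and X :: "nat \<Rightarrow> nat \<Rightarrow> 'a \<Rightarrow> real"
    and mu :: "nat \<Rightarrow> real" and G :: "nat \<Rightarrow> real" and m n :: nat
  assumes "prob_space M"
    and "m < n"
    and "\<And>t. t \<in> {1..n} \<Longrightarrow> G t > 0"
    and "\<And>j t. j \<in> {1..m} \<Longrightarrow> t \<in> {1..n} \<Longrightarrow> X j t \<in> borel_measurable M"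
    and "\<And>j t \<omega>. j \<in> {1..m} \<Longrightarrow> t \<in> {1..n} \<Longrightarrow> \<omega> \<in> space M \<Longrightarrow> X j t \<omega> \<in> {0..1}"
    and "\<And>j t. j \<in> {1..m} \<Longrightarrow> t \<in> {1..n} \<Longrightarrow> distr M borel (X j t) = distr M borel (X j 1)"
    and "\<And>j t. j \<in> {1..m} \<Longrightarrow> t \<in> {1..n} \<Longrightarrow> integral\<^sup>L M (X j t) = mu j"
    and "prob_space.indep_vars M (\<lambda>_. PiM {1..m} (\<lambda>_. borel))
           (\<lambda>t \<omega>. \<lambda>j\<in>{1..m}. X j t \<omega>) {1..n}"
  shows "integral\<^sup>L M (\<lambda>\<omega>. regret m n G mu (\<lambda>j t. X j t \<omega>))
    \<le> (\<Sum>j\<in>{1..m}. G j * (Max (mu ` {1..m}) - mu j))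
      + Max (G ` {m+1..n}) *
        ((\<Sum>j\<in>{j\<in>{1..m}. mu j < Max (mu ` {1..m})}.
            8 / (Max (mu ` {1..m}) - mu j) * ln (Max (xi G ` {m+1..n})))
         + (\<Sum>j\<in>{1..m}. (Max (mu ` {1..m}) - mu j) *
              (1 + (\<Sum>t\<in>{m+1..n}. 2 * (xi G t) powr (-4) * (real t - 1 - real m)^2))))"
proof -
  interpret bandit M X mu G m n
    by (rule bandit.intro[OF assms(1) assms(2) assms(3) assms(4) assms(5) assms(7) assms(8)])
  show ?thesis
  proof (cases "m = 0")
    case True
    then show ?thesis by (simp add: regret_def)
  next
    case False
    then show ?thesis using main by simp
  qed
qed

end
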